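(* Let $\Sigma^*$ be an $n\times n$ positive definite matrix whose conditional independence structure is a tree $T^*$ on $\{1,\dots,n\}$, let $D^*$ be a diagonal matrix with nonnegative diagonal entries, and let $\Sigma^o=\Sigma^*+D^*$. Suppose $\Sigma^o=\Sigma'+D'$ where $\Sigma'$ is an $n\times n$ positive definite matrix whose conditional independence structure is a tree $T'$ and $D'$ is a diagonal matrix with nonnegative diagonal entries. Then $T'\in\mathcal{T}_{T^*}$.
   Context: For an $n\times n$ positive definite matrix $\Sigma$ with inverse $\Omega=\Sigma^{-1}$, its conditional independence structure is the graph on $\{1,\dots,n\}$ with an edge $\{i,j\}$ ($i\neq j$) iff $\Omega_{ij}\neq 0$. Let $\mathcal{L}$ be the set of leaves of $T^*$. For a subset $\mathcal{S}\subseteq\mathcal{L}$ in which no two leaves share a common neighbor, let $T^{\mathcal{S}}$ be the tree obtained from $T^*$ by exchanging the position of each leaf $a\in\mathcal{S}$ with its unique neighbor (i.e. the image of $T^*$ under the permutation of labels swapping each such leaf with its neighbor). $\mathcal{T}_{T^*}$ is the set of all trees $T^{\mathcal{S}}$ over all such subsets $\mathcal{S}$. *)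

theory Defs
  imports "HOL-Analysis.Analysis"
begin

text \<open>Matrices are real n x n matrices indexed by a finite type 'n
(vertices 1..n are the elements of 'n). Graphs on the vertex set UNIV
are given by their edge sets, edges being 2-element sets.\<close>

definition pos_def_mat :: "real^'n^'n \<Rightarrow> bool" where
  "pos_def_mat A \<longleftrightarrow> transpose A = A \<and> (\<forall>x. x \<noteq> 0 \<longrightarrow> x \<bullet> (A *v x) > 0)"

definition nonneg_diag_mat :: "real^'n^'n \<Rightarrow> bool" where
  "nonneg_diag_mat D \<longleftrightarrow> (\<forall>i j. i \<noteq> j \<longrightarrow> D $ i $ j = 0) \<and> (\<forall>i. D $ i $ i \<ge> 0)"

definition ci_graph :: "real^'n^'n \<Rightarrow> 'n set set" where
  "ci_graph S = {{i, j} | i j. i \<noteq> j \<and> matrix_inv S $ i $ j \<noteq> 0}"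

definition adj :: "'n set set \<Rightarrow> 'n \<Rightarrow> 'n \<Rightarrow> bool" where
  "adj E u v \<longleftrightarrow> u \<noteq> v \<and> {u, v} \<in> E"

definition is_graph :: "'n set set \<Rightarrow> bool" where
  "is_graph E \<longleftrightarrow> (\<forall>e\<in>E. card e = 2)"

definition connected_graph :: "'n set set \<Rightarrow> bool" where
  "connected_graph E \<longleftrightarrow> (\<forall>u v. (adj E)\<^sup>*\<^sup>* u v)"

definition has_cycle :: "'n set set \<Rightarrow> bool" where
  "has_cycle E \<longleftrightarrow> (\<exists>vs. length vs \<ge> 3 \<and> distinct vs
      \<and> (\<forall>i. Suc i < length vs \<longrightarrow> adj E (vs ! i) (vs ! Suc i))
      \<and> adj E (last vs) (hd vs))"

definition is_tree :: "'n set set \<Rightarrow> bool" where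
  "is_tree E \<longleftrightarrow> is_graph E \<and> connected_graph E \<and> \<not> has_cycle E"

definition leaves :: "'n set set \<Rightarrow> 'n set" where
  "leaves E = {v. card {u. adj E v u} = 1}"

definition nbr :: "'n set set \<Rightarrow> 'n \<Rightarrow> 'n" where
  "nbr E a = (THE u. adj E a u)"

definition admissible_leaf_set :: "'n set set \<Rightarrow> 'n set \<Rightarrow> bool" where
  "admissible_leaf_set E S \<longleftrightarrow> S \<subseteq> leaves E
      \<and> (\<forall>a\<in>S. \<forall>b\<in>S. a \<noteq> b \<longrightarrow> nbr E a \<noteq> nbr E b)"

definition leaf_swap :: "'n set set \<Rightarrow> 'n set \<Rightarrow> 'n \<Rightarrow> 'n" where
  "leaf_swap E S x = (if x \<in> S then nbr E x
      else if (\<exists>a\<in>S. nbr E a = x) then (THE a. a \<in> S \<and> nbr E a = x) else x)"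

definition swapped_tree :: "'n set set \<Rightarrow> 'n set \<Rightarrow> 'n set set" where
  "swapped_tree E S = (\<lambda>e. leaf_swap E S ` e) ` E"

definition tree_class :: "'n set set \<Rightarrow> 'n set set set" where
  "tree_class E = {swapped_tree E S | S. admissible_leaf_set E S}"

end

theory Submission
  imports Defs
begin

lemma quad_form: "(x::real^'n::finite) \<bullet> (A *v x) = (\<Sum>i\<in>UNIV. \<Sum>j\<in>UNIV. x$i * A$i$j * x$j)"
  unfolding inner_vec_def matrix_vector_mult_def by (simp add: sum_distrib_left algebra_simps)
lemma pd_sym: "pos_def_mat A \<Longrightarrow> A$i$j = A$j$i"
  unfolding pos_def_mat_def by (metis transpose_def vec_lambda_beta)
lemma delta_mult_l: "(if i = k then 1 else 0) * (t::real) = (if i = k then t else 0)" by simp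
lemma delta_mult_r: "(t::real) * (if i = k then 1 else 0) = (if i = k then t else 0)" by simp
lemma pd_diag_pos:
  fixes A :: "real^'n::finite^'n"
  assumes "pos_def_mat A" shows "A$k$k > 0"
proof -
  define x :: "real^'n" where "x = (\<chi> v. if v = k then 1 else 0)"
  have "x$k = 1" by (simp add: x_def)
  then have "x \<noteq> 0" by auto
  then have "x \<bullet> (A *v x) > 0" using assms unfolding pos_def_mat_def by blast
  also have "x \<bullet> (A *v x) = A$k$k" unfolding quad_form x_def
    by (simp only: vec_lambda_beta delta_mult_l delta_mult_r) simp
  finally show ?thesis .
qed

definition ev :: "'n::finite \<Rightarrow> real^'n" where "ev i = (\<chi> v. if v = i then 1 else 0)"

lemma ev_quad: "ev i \<bullet> (A *v ev j) = A$i$j"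
  unfolding inner_vec_def matrix_vector_mult_def ev_def
  by (simp only: vec_lambda_beta delta_mult_l delta_mult_r inner_real_def) simp

lemma pd_2x2:
  fixes A :: "real^'n::finite^'n"
  assumes "pos_def_mat A" "p \<noteq> k" shows "(A$p$k)^2 < A$p$p * A$k$k"
proof -
  define a where "a = A$k$k"
  define b where "b = - A$p$k"
  have a: "a > 0" using pd_diag_pos[OF assms(1)] a_def by auto
  define x :: "real^'n" where "x = a *s ev p + b *s ev k"
  have "x$p = a" using assms(2) by (simp add: x_def ev_def)
  then have "x \<noteq> 0" using a by auto
  then have "x \<bullet> (A *v x) > 0" using assms unfolding pos_def_mat_def by blast
  also have "x \<bullet> (A *v x) = a*a*A$p$p + a*b*A$p$k + b*a*A$k$p + b*b*A$k$k" unfolding x_def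
    by (simp add: matrix_vector_right_distrib inner_add_left inner_add_right
       matrix_vector_mult_scaleR scalar_mult_eq_scaleR ev_quad algebra_simps)
  also have "\<dots> = a * (A$p$p * A$k$k - (A$p$k)^2)"
    using pd_sym[OF assms(1), of k p] unfolding a_def b_def by (simp add: algebra_simps power2_eq_square)
  finally show ?thesis using a by (simp add: zero_less_mult_iff)
qed

lemma pd_invertible:
  fixes A :: "real^'n::finite^'n"
  assumes "pos_def_mat A" shows "invertible A"
proof -
  have "\<forall>x. A *v x = 0 \<longrightarrow> x = 0"
  proof (intro allI impI)
    fix x assume "A *v x = 0"
    then have "x \<bullet> (A *v x) = 0" by simp
    then show "x = 0" using assms unfolding pos_def_mat_def by force
  qed
  then show ?thesis using matrix_left_invertible_ker invertible_left_inverse by blast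
qed

lemma inv_props:
  fixes A :: "real^'n::finite^'n"
  assumes "pos_def_mat A"
  shows "A ** matrix_inv A = mat 1" "matrix_inv A ** A = mat 1"
proof -
  have "\<exists>A'. A ** A' = mat 1 \<and> A' ** A = mat 1" using pd_invertible[OF assms] invertible_def by blast
  from someI_ex[OF this] show "A ** matrix_inv A = mat 1" "matrix_inv A ** A = mat 1"
    unfolding matrix_inv_def by auto
qed

lemma inv_sym:
  fixes A :: "real^'n::finite^'n"
  assumes "pos_def_mat A"
  shows "matrix_inv A $ i $ j = matrix_inv A $ j $ i"
proof -
  let ?O = "matrix_inv A"
  have tA: "transpose A = A" using assms unfolding pos_def_mat_def by auto
  have "transpose (?O ** A) = mat 1" using inv_props(2)[OF assms] by (simp add: transpose_mat)
  then have "A ** transpose ?O = mat 1" by (simp add: matrix_transpose_mul tA)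
  then have "?O ** (A ** transpose ?O) = ?O" by simp
  then have "transpose ?O = ?O" by (simp add: matrix_mul_assoc inv_props(2)[OF assms])
  then show ?thesis by (metis transpose_def vec_lambda_beta)
qed

lemma inv_left_sum:
  fixes A :: "real^'n::finite^'n"
  assumes "pos_def_mat A"
  shows "(\<Sum>c\<in>UNIV. matrix_inv A $ a $ c * A $ c $ b) = (if a = b then 1 else 0)"
  using arg_cong[OF inv_props(2)[OF assms], of "\<lambda>M. M $ a $ b"]
  by (simp add: matrix_matrix_mult_def mat_def)

lemma inv_right_sum:
  fixes A :: "real^'n::finite^'n"
  assumes "pos_def_mat A"
  shows "(\<Sum>c\<in>UNIV. A $ a $ c * matrix_inv A $ c $ b) = (if a = b then 1 else 0)"
  using arg_cong[OF inv_props(1)[OF assms], of "\<lambda>M. M $ a $ b"]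
  by (simp add: matrix_matrix_mult_def mat_def)

definition ravoid :: "'n set set \<Rightarrow> 'n \<Rightarrow> 'n \<Rightarrow> 'n \<Rightarrow> bool" where
  "ravoid E k = (\<lambda>u v. adj E u v \<and> u \<noteq> k \<and> v \<noteq> k)\<^sup>*\<^sup>*"
definition rnoedge :: "'n set set \<Rightarrow> 'n \<Rightarrow> 'n \<Rightarrow> 'n \<Rightarrow> 'n \<Rightarrow> bool" where
  "rnoedge E a b = (\<lambda>u v. adj E u v \<and> {u, v} \<noteq> {a, b})\<^sup>*\<^sup>*"
definition sep :: "'n set set \<Rightarrow> 'n \<Rightarrow> 'n \<Rightarrow> 'n \<Rightarrow> bool" where
  "sep E k i j \<longleftrightarrow> i \<noteq> k \<and> j \<noteq> k \<and> \<not> ravoid E k i j"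

lemma adj_sym: "adj E u v = adj E v u"
  unfolding adj_def by (auto simp: insert_commute)
lemma adj_irrefl: "\<not> adj E u u" unfolding adj_def by auto

lemma rtranclp_sym_gen: assumes "\<And>a b. r a b \<Longrightarrow> r b a" "r\<^sup>*\<^sup>* x y" shows "r\<^sup>*\<^sup>* y x"
  using assms(2)
proof (induction rule: rtranclp_induct)
  case base then show ?case by simp
next
  case (step y z) then show ?case using assms(1) by (meson converse_rtranclp_into_rtranclp)
qed

lemma ravoid_sym: "ravoid E k x y \<Longrightarrow> ravoid E k y x"
  unfolding ravoid_def by (rule rtranclp_sym_gen) (auto simp: adj_sym)
lemma rnoedge_sym: "rnoedge E a b x y \<Longrightarrow> rnoedge E a b y x"
  unfolding rnoedge_def by (rule rtranclp_sym_gen) (auto simp: adj_sym insert_commute)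
lemma ravoid_trans: "ravoid E k x y \<Longrightarrow> ravoid E k y z \<Longrightarrow> ravoid E k x z"
  unfolding ravoid_def by auto
lemma rnoedge_trans: "rnoedge E a b x y \<Longrightarrow> rnoedge E a b y z \<Longrightarrow> rnoedge E a b x z"
  unfolding rnoedge_def by auto
lemma ravoid_refl: "ravoid E k x x" unfolding ravoid_def by auto
lemma ravoid_ne: "ravoid E k i x \<Longrightarrow> i \<noteq> k \<Longrightarrow> x \<noteq> k"
  unfolding ravoid_def by (induction rule: rtranclp_induct) auto
lemma ravoid_step: "ravoid E k i x \<Longrightarrow> adj E x y \<Longrightarrow> x \<noteq> k \<Longrightarrow> y \<noteq> k \<Longrightarrow> ravoid E k i y"
  unfolding ravoid_def by (simp add: rtranclp.rtrancl_into_rtrancl)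
lemma ravoid_edge: "a = b \<or> adj E a b \<Longrightarrow> a \<noteq> k \<Longrightarrow> b \<noteq> k \<Longrightarrow> ravoid E k a b"
  using ravoid_step[OF ravoid_refl] ravoid_refl by metis
lemma rnoedge_step: "rnoedge E a b i x \<Longrightarrow> adj E x y \<Longrightarrow> {x, y} \<noteq> {a, b} \<Longrightarrow> rnoedge E a b i y"
  unfolding rnoedge_def by (simp add: rtranclp.rtrancl_into_rtrancl)
lemma ravoid_rnoedge: "ravoid E k x y \<Longrightarrow> rnoedge E k v x y"
  unfolding ravoid_def rnoedge_def
  by (rule rtranclp_mono[THEN predicate2D, rotated]) (auto simp: doubleton_eq_iff)
lemma ravoid_rnoedge2: "ravoid E k x y \<Longrightarrow> rnoedge E v k x y"
  unfolding ravoid_def rnoedge_def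
  by (rule rtranclp_mono[THEN predicate2D, rotated]) (auto simp: doubleton_eq_iff)
lemma ravoid_adj: "ravoid E k x y \<Longrightarrow> (adj E)\<^sup>*\<^sup>* x y"
  unfolding ravoid_def by (rule rtranclp_mono[THEN predicate2D, rotated]) auto

lemma successively_nth: "successively r vs \<Longrightarrow> Suc i < length vs \<Longrightarrow> r (vs!i) (vs!Suc i)"
proof (induction r vs arbitrary: i rule: successively.induct)
  case (3 P x y xs) then show ?case by (cases i) auto
qed auto

lemma distinct_path: "r\<^sup>*\<^sup>* x y \<Longrightarrow> \<exists>vs. vs \<noteq> [] \<and> hd vs = x \<and> last vs = y \<and> distinct vs \<and> successively r vs"
proof (induction rule: rtranclp_induct)
  case base then show ?case by (intro exI[of _ "[x]"]) auto
next
  case (step y z)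
  then obtain vs where vs: "vs \<noteq> []" "hd vs = x" "last vs = y" "distinct vs" "successively r vs" by blast
  show ?case
  proof (cases "z \<in> set vs")
    case True
    then obtain as bs where d: "vs = as @ z # bs" by (meson split_list)
    have "successively r (as @ [z])" using vs(5) unfolding d
      by (auto simp: successively_append_iff successively_Cons)
    moreover have "hd (as @ [z]) = x" using vs(2) d by (cases as) auto
    ultimately show ?thesis using vs(4) d by (intro exI[of _ "as @ [z]"]) auto
  next
    case False
    have "successively r (vs @ [z])" using vs step.hyps(2)
      by (simp add: successively_append_iff)
    then show ?thesis using vs False by (intro exI[of _ "vs @ [z]"]) auto
  qed
qed

lemma tree_connected: "is_tree E \<Longrightarrow> (adj E)\<^sup>*\<^sup>* x y"
  unfolding is_tree_def connected_graph_def by blast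

lemma edgecut:
  assumes "is_tree E" "adj E u v" shows "\<not> rnoedge E u v u v"
proof
  assume "rnoedge E u v u v"
  then have "(\<lambda>a b. adj E a b \<and> {a, b} \<noteq> {u, v})\<^sup>*\<^sup>* u v" unfolding rnoedge_def .
  from distinct_path[OF this] obtain vs where vs: "vs \<noteq> []" "hd vs = u" "last vs = v" "distinct vs"
    "successively (\<lambda>a b. adj E a b \<and> {a, b} \<noteq> {u, v}) vs"
    by blast
  have uv: "u \<noteq> v" using assms(2) adj_irrefl by metis
  have l3: "length vs \<ge> 3"
  proof -
    obtain a vs1 where v1: "vs = a # vs1" using vs(1) by (cases vs) auto
    have "vs1 \<noteq> []" using v1 vs(2,3) uv by auto
    then obtain b vs2 where v2: "vs1 = b # vs2" by (cases vs1) auto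
    have "vs2 \<noteq> []"
    proof
      assume "vs2 = []"
      then have "vs = [u, v]" using v1 v2 vs(2,3) by simp
      then show False using vs(5) by simp
    qed
    then show ?thesis using v1 v2 by (cases vs2) auto
  qed
  have "has_cycle E" unfolding has_cycle_def
  proof (intro exI conjI allI impI)
    show "3 \<le> length vs" "distinct vs" by fact+
    fix i assume "Suc i < length vs"
    then show "adj E (vs ! i) (vs ! Suc i)" using successively_nth[OF vs(5)] by blast
  next
    show "adj E (last vs) (hd vs)" using vs(2,3) assms(2) adj_sym[of E u v] by simp
  qed
  then show False using assms(1) unfolding is_tree_def by blast
qed

lemma nbr_exists:
  assumes "is_tree E" "i \<noteq> k" shows "\<exists>p. adj E p k \<and> ravoid E k i p"
proof -
  have "(adj E)\<^sup>*\<^sup>* i y \<Longrightarrow> ravoid E k i y \<or> (\<exists>p. adj E p k \<and> ravoid E k i p)" for y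
  proof (induction rule: rtranclp_induct)
    case base then show ?case by (simp add: ravoid_refl)
  next
    case (step y z)
    show ?case
    proof (cases "\<exists>p. adj E p k \<and> ravoid E k i p")
      case False
      then have r: "ravoid E k i y" using step by blast
      have yk: "y \<noteq> k" using ravoid_ne[OF r assms(2)] .
      show ?thesis
      proof (cases "z = k")
        case True then show ?thesis using r step.hyps(2) by blast
      next
        case False then show ?thesis using ravoid_step[OF r step.hyps(2) yk False] by blast
      qed
    qed auto
  qed
  moreover have "\<not> ravoid E k i k" using ravoid_ne[of E k i k] assms(2) by blast
  ultimately show ?thesis using tree_connected[OF assms(1), of i k] by blast
qed

lemma U_sep:
  assumes "is_tree E" "adj E p k" "ravoid E k p x" "x \<noteq> p" shows "sep E p x k"
proof -
  have pk: "p \<noteq> k" using assms(2) adj_irrefl by metis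
  have xk: "x \<noteq> k" using ravoid_ne[OF assms(3) pk] .
  have "\<not> ravoid E p x k"
  proof
    assume "ravoid E p x k"
    then have "rnoedge E p k x k" using ravoid_rnoedge by metis
    moreover have "rnoedge E p k p x" using assms(3) ravoid_rnoedge2 by metis
    ultimately have "rnoedge E p k p k" using rnoedge_trans by metis
    then show False using edgecut[OF assms(1,2)] by blast
  qed
  then show ?thesis unfolding sep_def using assms(4) pk by auto
qed

lemma two_nbrs_sep:
  assumes "is_tree E" "adj E k x" "adj E k y" "x \<noteq> y" shows "sep E k x y"
proof -
  have "\<not> ravoid E k x y"
  proof
    assume "ravoid E k x y"
    then have "rnoedge E x k x y" using ravoid_rnoedge2 by metis
    moreover have "{y, k} \<noteq> {x, k}" using assms(4) by (auto simp: doubleton_eq_iff)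
    ultimately have "rnoedge E x k x k" using rnoedge_step assms(3) adj_sym by metis
    then show False using edgecut[OF assms(1)] assms(2) adj_sym by metis
  qed
  then show ?thesis unfolding sep_def using assms adj_irrefl by metis
qed

lemma leafD:
  assumes "k \<in> leaves E" shows "adj E k (nbr E k)" "adj E k u \<Longrightarrow> u = nbr E k"
proof -
  from assms obtain w where w: "{u. adj E k u} = {w}" unfolding leaves_def by (auto simp: card_1_singleton_iff)
  then have "nbr E k = w" unfolding nbr_def by (intro the_equality) (auto simp: set_eq_iff)
  then show "adj E k (nbr E k)" "adj E k u \<Longrightarrow> u = nbr E k" using w by auto
qed

lemma leaf_nosep:
  assumes "is_tree E" "k \<in> leaves E" "i \<noteq> k" "j \<noteq> k" shows "ravoid E k i j"
proof -
  obtain p where p: "adj E p k" "ravoid E k i p" using nbr_exists[OF assms(1,3)] by blast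
  obtain q where q: "adj E q k" "ravoid E k j q" using nbr_exists[OF assms(1,4)] by blast
  have "p = nbr E k" "q = nbr E k" using leafD(2)[OF assms(2)] p(1) q(1) adj_sym by metis+
  then show ?thesis using p(2) ravoid_sym[OF q(2)] ravoid_trans by metis
qed

lemma sep_nonleaf: "is_tree E \<Longrightarrow> sep E k i j \<Longrightarrow> k \<notin> leaves E"
  using leaf_nosep unfolding sep_def by metis

lemma nonleaf_two:
  assumes "is_tree E" "k \<notin> leaves E" "x \<noteq> k"
  shows "\<exists>a b. a \<noteq> b \<and> adj E k a \<and> adj E k b"
proof -
  obtain p where "adj E p k" using nbr_exists[OF assms(1,3)] by blast
  then have p: "p \<in> {u. adj E k u}" using adj_sym by fastforce
  show ?thesis
  proof (rule ccontr)
    assume "\<not> ?thesis"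
    then have "{u. adj E k u} = {p}" using p by blast
    then show False using assms(2) unfolding leaves_def by simp
  qed
qed

lemma edge_char:
  assumes "is_tree E" "x \<noteq> y" shows "adj E x y \<longleftrightarrow> (\<forall>k. \<not> sep E k x y)"
proof
  assume a: "adj E x y" show "\<forall>k. \<not> sep E k x y"
  proof (intro allI notI)
    fix k assume "sep E k x y"
    then have "x \<noteq> k" "y \<noteq> k" "\<not> ravoid E k x y" unfolding sep_def by auto
    then show False using ravoid_edge[of x y E k] a by blast
  qed
next
  assume ns: "\<forall>k. \<not> sep E k x y"
  show "adj E x y"
  proof (rule ccontr)
    assume na: "\<not> adj E x y"
    obtain p where p: "adj E p y" "ravoid E y x p" using nbr_exists[OF assms] by blast
    have "p \<noteq> x" using na p(1) by blast
    then have "sep E p x y" using U_sep[OF assms(1) p(1)] ravoid_sym[OF p(2)] by blast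
    then show False using ns by blast
  qed
qed

lemma edge_split:
  assumes "is_tree E" "adj E u v" shows "rnoedge E u v u x \<or> rnoedge E u v v x"
proof -
  have "(adj E)\<^sup>*\<^sup>* u x \<Longrightarrow> rnoedge E u v u x \<or> rnoedge E u v v x" for x
  proof (induction rule: rtranclp_induct)
    case base then show ?case unfolding rnoedge_def by simp
  next
    case (step y z)
    show ?case
    proof (cases "{y, z} = {u, v}")
      case True
      then have "z = u \<or> z = v" by (auto simp: doubleton_eq_iff)
      then show ?thesis unfolding rnoedge_def by auto
    next
      case False
      from step.IH show ?thesis
      proof
        assume "rnoedge E u v u y" then show ?thesis using rnoedge_step[OF _ step.hyps(2) False] by blast
      next
        assume "rnoedge E u v v y" then show ?thesis using rnoedge_step[OF _ step.hyps(2) False] by blast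
      qed
    qed
  qed
  then show ?thesis using tree_connected[OF assms(1)] by blast
qed

lemma edge_split_sep:
  assumes "is_tree E" "adj E u v" "x \<noteq> u" "x \<noteq> v" shows "sep E u x v \<or> sep E v x u"
proof -
  have uv: "u \<noteq> v" using assms(2) adj_irrefl by metis
  have ec: "\<not> rnoedge E u v u v" using edgecut[OF assms(1,2)] .
  consider "rnoedge E u v u x" | "rnoedge E u v v x" using edge_split[OF assms(1,2), of x] by blast
  then show ?thesis
  proof cases
    case 1
    have "\<not> ravoid E u x v"
    proof
      assume "ravoid E u x v"
      then have "rnoedge E u v x v" using ravoid_rnoedge by metis
      then show False using 1 ec rnoedge_trans by metis
    qed
    then show ?thesis unfolding sep_def using assms uv by auto
  next
    case 2
    have "\<not> ravoid E v x u"
    proof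
      assume "ravoid E v x u"
      then have "rnoedge E u v x u" using ravoid_rnoedge2 by metis
      then have "rnoedge E u v v u" using 2 rnoedge_trans by metis
      then show False using ec rnoedge_sym by metis
    qed
    then show ?thesis unfolding sep_def using assms uv by auto
  qed
qed

lemma comp_psubset:
  assumes "ravoid E k i p" "i \<noteq> k" "sep E p i k" "i \<noteq> p"
  shows "{x. ravoid E p i x} \<subset> {x. ravoid E k i x}"
proof
  show "{x. ravoid E p i x} \<subseteq> {x. ravoid E k i x}"
  proof
    fix x assume "x \<in> {x. ravoid E p i x}"
    then have "ravoid E p i x" by simp
    then have "ravoid E k i x" unfolding ravoid_def[of E p]
    proof (induction rule: rtranclp_induct)
      case base then show ?case by (simp add: ravoid_refl)
    next
      case (step y z)
      have "y \<noteq> k" using ravoid_ne[OF step.IH assms(2)] .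
      moreover have "z \<noteq> k"
      proof
        assume "z = k"
        then have "ravoid E p i k" using step unfolding ravoid_def by (simp add: rtranclp.rtrancl_into_rtrancl)
        then show False using assms(3) unfolding sep_def by blast
      qed
      ultimately show ?case using ravoid_step[OF step.IH] step.hyps(2) by blast
    qed
    then show "x \<in> {x. ravoid E k i x}" by simp
  qed
  show "{x. ravoid E p i x} \<noteq> {x. ravoid E k i x}"
    using assms(1) ravoid_ne[of E p i p] assms(4) by blast
qed

lemma graph_edges: "is_graph E \<Longrightarrow> E = {{x, y} | x y. adj E x y}"
  unfolding is_graph_def adj_def by (auto simp: card_2_iff) (metis (no_types) doubleton_eq_iff)

lemma adj_ci:
  fixes S :: "real^'n::finite^'n"
  assumes "pos_def_mat S"
  shows "adj (ci_graph S) u v \<longleftrightarrow> u \<noteq> v \<and> matrix_inv S $ u $ v \<noteq> 0"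
proof
  assume "adj (ci_graph S) u v"
  then obtain i j where "{u, v} = {i, j}" "i \<noteq> j" "matrix_inv S $ i $ j \<noteq> 0" "u \<noteq> v"
    unfolding adj_def ci_graph_def by blast
  then show "u \<noteq> v \<and> matrix_inv S $ u $ v \<noteq> 0"
    using inv_sym[OF assms, of i j] by (auto simp: doubleton_eq_iff)
next
  assume "u \<noteq> v \<and> matrix_inv S $ u $ v \<noteq> 0"
  then show "adj (ci_graph S) u v" unfolding adj_def ci_graph_def by blast
qed

lemma inv_recover:
  fixes S :: "real^'n::finite^'n"
  assumes "pos_def_mat S"
  shows "(\<Sum>c\<in>UNIV. S$a$c * (\<Sum>u\<in>UNIV. matrix_inv S$c$u * z u)) = z a"
proof -
  have "(\<Sum>c\<in>UNIV. S$a$c * (\<Sum>u\<in>UNIV. matrix_inv S$c$u * z u))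
      = (\<Sum>u\<in>UNIV. (\<Sum>c\<in>UNIV. S$a$c * matrix_inv S$c$u) * z u)"
    unfolding sum_distrib_left sum_distrib_right by (subst sum.swap) (simp add: mult.assoc)
  also have "\<dots> = (\<Sum>u\<in>UNIV. (if a = u then z u else 0))"
    by (simp add: inv_right_sum[OF assms] delta_mult_l)
  also have "\<dots> = z a" by simp
  finally show ?thesis .
qed

lemma sum_single:
  fixes f :: "'n::finite \<Rightarrow> real"
  assumes "\<And>c. c \<noteq> k \<Longrightarrow> f c = 0" shows "(\<Sum>c\<in>UNIV. f c) = f k"
proof -
  have "(\<Sum>c\<in>UNIV. f c) = (\<Sum>c\<in>UNIV. if c = k then f k else 0)"
    by (rule sum.cong) (auto simp: assms)
  then show ?thesis by simp
qed

lemma factA: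
  fixes S :: "real^'n::finite^'n"
  assumes pd: "pos_def_mat S" and sp: "sep (ci_graph S) k i j"
  shows "S$i$j * S$k$k = S$i$k * S$k$j"
proof -
  define E where "E = ci_graph S"
  define Om where "Om = matrix_inv S"
  define C where "C = {x. ravoid E k i x}"
  define t where "t = S$k$j / S$k$k"
  define y where "y u = S$u$j - t * S$u$k" for u
  define z where "z u = (if u \<in> C then y u else 0)" for u
  define w where "w v = (\<Sum>u\<in>UNIV. Om$v$u * z u)" for v
  have ik: "i \<noteq> k" and jk: "j \<noteq> k" and nij: "\<not> ravoid E k i j" using sp unfolding sep_def E_def by auto
  have skk: "S$k$k > 0" using pd_diag_pos[OF pd] .
  have kC: "k \<notin> C" unfolding C_def using ravoid_ne[of E k i k] ik by blast
  have jC: "j \<notin> C" unfolding C_def using nij by blast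
  have iC: "i \<in> C" unfolding C_def by (simp add: ravoid_refl)
  have yk: "y k = 0" unfolding y_def t_def using skk by simp
  have adjO: "Om$v$u \<noteq> 0 \<Longrightarrow> v \<noteq> u \<Longrightarrow> adj E v u" for v u
    unfolding E_def Om_def using adj_ci[OF pd] by blast
  have closed: "v \<in> C \<Longrightarrow> adj E v u \<Longrightarrow> u \<noteq> k \<Longrightarrow> u \<in> C" for v u
    unfolding C_def using ravoid_step[of E k i v u] ravoid_ne[of E k i v] ik by blast
  have w0: "w v = 0" if vk: "v \<noteq> k" for v
  proof (cases "v \<in> C")
    case True
    have eqC: "Om$v$u * z u = Om$v$u * y u" for u
    proof (cases "u \<in> C")
      case False
      show ?thesis
      proof (cases "u = k")
        case True then show ?thesis using yk False by (simp add: z_def)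
      next
        case uk: False
        have "Om$v$u = 0"
        proof (rule ccontr)
          assume "Om$v$u \<noteq> 0"
          moreover have "v \<noteq> u" using True False by blast
          ultimately have "adj E v u" using adjO by blast
          then show False using closed[OF True _ uk] False by blast
        qed
        then show ?thesis by simp
      qed
    qed (simp add: z_def)
    have "w v = (\<Sum>u\<in>UNIV. Om$v$u * y u)" unfolding w_def by (simp only: eqC)
    also have "\<dots> = (\<Sum>u\<in>UNIV. Om$v$u * S$u$j) - t * (\<Sum>u\<in>UNIV. Om$v$u * S$u$k)"
      unfolding y_def by (simp add: algebra_simps sum_subtractf sum_distrib_left)
    also have "\<dots> = 0" unfolding Om_def using inv_left_sum[OF pd] vk True jC by auto
    finally show ?thesis .
  next
    case False
    have eq0: "Om$v$u * z u = 0" for u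
    proof (cases "u \<in> C")
      case True
      have "Om$v$u = 0"
      proof (rule ccontr)
        assume "Om$v$u \<noteq> 0"
        moreover have "v \<noteq> u" using True False by blast
        ultimately have "adj E u v" using adjO adj_sym by metis
        then show False using closed[OF True _ vk] False by blast
      qed
      then show ?thesis by simp
    qed (simp add: z_def)
    show ?thesis unfolding w_def by (simp only: eq0) simp
  qed
  have zrec: "z a = S$a$k * w k" for a
  proof -
    have "z a = (\<Sum>c\<in>UNIV. S$a$c * w c)" unfolding w_def Om_def using inv_recover[OF pd, of a z] by simp
    also have "\<dots> = S$a$k * w k" by (rule sum_single) (simp add: w0)
    finally show ?thesis .
  qed
  have "S$k$k * w k = 0" using zrec[of k] kC by (simp add: z_def)
  then have "w k = 0" using skk by simp
  then have "y i = 0" using zrec[of i] iC by (simp add: z_def)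
  then show ?thesis unfolding y_def t_def using skk by (simp add: field_simps)
qed

lemma edge_nonzero:
  fixes S :: "real^'n::finite^'n"
  assumes pd: "pos_def_mat S" and tr: "is_tree (ci_graph S)" and uv: "adj (ci_graph S) u v"
  shows "S$u$v \<noteq> 0"
proof
  assume suv: "S$u$v = 0"
  define E where "E = ci_graph S"
  define Om where "Om = matrix_inv S"
  define U where "U = {x. rnoedge E u v u x}"
  define z where "z x = (if x \<in> U then S$x$v else 0)" for x
  define w where "w a = (\<Sum>x\<in>UNIV. Om$a$x * z x)" for a
  have uneq: "u \<noteq> v" using uv adj_irrefl by metis
  have Ouv: "Om$u$v \<noteq> 0" using uv adj_ci[OF pd] unfolding Om_def by blast
  have vU: "v \<notin> U" unfolding U_def E_def using edgecut[OF tr uv] by simp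
  have uU: "u \<in> U" unfolding U_def rnoedge_def by simp
  have adjO: "Om$a$x \<noteq> 0 \<Longrightarrow> a \<noteq> x \<Longrightarrow> adj E a x" for a x
    unfolding E_def Om_def using adj_ci[OF pd] by blast
  have closed: "a \<in> U \<Longrightarrow> adj E a x \<Longrightarrow> {a, x} \<noteq> {u, v} \<Longrightarrow> x \<in> U" for a x
    unfolding U_def using rnoedge_step[of E u v u a x] by blast
  have w0: "w a = 0" if "a \<noteq> u" "a \<noteq> v" for a
  proof (cases "a \<in> U")
    case True
    have av: "a \<noteq> v" using True vU by blast
    have eqC: "Om$a$x * z x = Om$a$x * S$x$v" for x
    proof (cases "x \<in> U")
      case False
      have "Om$a$x = 0"
      proof (rule ccontr)
        assume "Om$a$x \<noteq> 0"
        then have "adj E a x" using adjO True False by blast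
        moreover have "{a, x} \<noteq> {u, v}" using that av by (auto simp: doubleton_eq_iff)
        ultimately show False using closed True False by blast
      qed
      then show ?thesis by simp
    qed (simp add: z_def)
    have "w a = (\<Sum>x\<in>UNIV. Om$a$x * S$x$v)" unfolding w_def by (simp only: eqC)
    then show ?thesis unfolding Om_def using inv_left_sum[OF pd] av by simp
  next
    case False
    have eq0: "Om$a$x * z x = 0" for x
    proof (cases "x \<in> U")
      case True
      have "Om$a$x = 0"
      proof (rule ccontr)
        assume "Om$a$x \<noteq> 0"
        then have "adj E x a" using adjO True False adj_sym by metis
        moreover have "{x, a} \<noteq> {u, v}" using uU vU False True that by (auto simp: doubleton_eq_iff)
        ultimately show False using closed True False by blast
      qed
      then show ?thesis by simp
    qed (simp add: z_def)
    show ?thesis unfolding w_def by (simp only: eq0) simp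
  qed
  have "z u = (\<Sum>c\<in>UNIV. S$u$c * w c)" unfolding w_def Om_def using inv_recover[OF pd, of u z] by simp
  also have "\<dots> = S$u$u * w u" by (rule sum_single) (metis w0 suv mult_zero_left mult_zero_right)
  finally have "S$u$u * w u = 0" using uU suv by (simp add: z_def)
  then have wu: "w u = 0" using pd_diag_pos[OF pd, of u] by simp
  have eqU: "Om$u$x * z x = Om$u$x * S$x$v - (if x = v then Om$u$v * S$v$v else 0)" for x
  proof (cases "x \<in> U")
    case True then show ?thesis using vU by (auto simp: z_def)
  next
    case False
    show ?thesis
    proof (cases "x = v")
      case True then show ?thesis using False by (simp add: z_def)
    next
      case xv: False
      have "Om$u$x = 0"
      proof (rule ccontr)
        assume "Om$u$x \<noteq> 0"
        then have "adj E u x" using adjO uU False by blast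
        moreover have "{u, x} \<noteq> {u, v}" using xv uneq by (auto simp: doubleton_eq_iff)
        ultimately show False using closed uU False by blast
      qed
      then show ?thesis using xv by simp
    qed
  qed
  have "w u = (\<Sum>x\<in>UNIV. Om$u$x * S$x$v) - Om$u$v * S$v$v"
    unfolding w_def by (simp only: eqU sum_subtractf) simp
  also have "\<dots> = - Om$u$v * S$v$v" unfolding Om_def using inv_left_sum[OF pd] uneq by simp
  finally have "Om$u$v * S$v$v = 0" using wu by simp
  then show False using Ouv pd_diag_pos[OF pd, of v] by simp
qed

lemma all_nonzero:
  fixes S :: "real^'n::finite^'n"
  assumes pd: "pos_def_mat S" and tr: "is_tree (ci_graph S)" and ij: "i \<noteq> j"
  shows "S$i$j \<noteq> 0"
proof -
  define E where "E = ci_graph S"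
  have "(adj E)\<^sup>*\<^sup>* i y \<Longrightarrow> y = i \<or> S$i$y \<noteq> 0" for y
  proof (induction rule: rtranclp_induct)
    case (step y z)
    have yz: "S$y$z \<noteq> 0" using edge_nonzero[OF pd tr] step.hyps(2) unfolding E_def by blast
    show ?case
    proof (cases "z = i")
      case False
      show ?thesis
      proof (cases "y = i")
        case True then show ?thesis using yz by simp
      next
        case yi: False
        then have iy: "S$i$y \<noteq> 0" using step.IH by blast
        have "sep E y i z \<or> sep E z i y"
          using edge_split_sep[OF tr step.hyps(2)[unfolded E_def]] yi False unfolding E_def by metis
        then show ?thesis
        proof
          assume "sep E y i z"
          then have "S$i$z * S$y$y = S$i$y * S$y$z" using factA[OF pd] unfolding E_def by blast
          then show ?thesis using iy yz by auto
        next
          assume "sep E z i y"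
          then have "S$i$y * S$z$z = S$i$z * S$z$y" using factA[OF pd] unfolding E_def by blast
          then show ?thesis using iy pd_diag_pos[OF pd, of z] by auto
        qed
      qed
    qed simp
  qed simp
  then show ?thesis using tree_connected[OF tr, of i j] ij unfolding E_def by blast
qed

lemma factB:
  fixes S :: "real^'n::finite^'n"
  assumes pd: "pos_def_mat S" and tr: "is_tree (ci_graph S)"
  shows "i \<noteq> j \<Longrightarrow> k \<noteq> i \<Longrightarrow> k \<noteq> j \<Longrightarrow> \<not> sep (ci_graph S) k i j \<Longrightarrow>
         S$i$j * S$i$k * S$k$j < (S$i$j)^2 * S$k$k"
proof (induction "card {x. ravoid (ci_graph S) k i x}" arbitrary: k i j rule: less_induct)
  case less
  define E where "E = ci_graph S"
  have ik: "i \<noteq> k" using less by auto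
  have rij: "ravoid E k i j" using less unfolding sep_def E_def by auto
  obtain p where p: "adj E p k" "ravoid E k i p" using nbr_exists[OF tr ik] unfolding E_def by blast
  have pk: "p \<noteq> k" using p(1) adj_irrefl by metis
  have sij: "S$i$j \<noteq> 0" using all_nonzero[OF pd tr less(2)] .
  have spp: "S$p$p > 0" using pd_diag_pos[OF pd] .
  have skk: "S$k$k > 0" using pd_diag_pos[OF pd] .
  have spk: "(S$p$k)^2 < S$p$p * S$k$k" using pd_2x2[OF pd pk] .
  have sym: "S$a$b = S$b$a" for a b using pd_sym[OF pd] .
  have hpi: "p = i \<or> sep E p i k"
    using U_sep[OF tr[folded E_def] p(1) ravoid_sym[OF p(2)]] by blast
  have hpj: "p = j \<or> sep E p j k"
    using U_sep[OF tr[folded E_def] p(1) ravoid_trans[OF ravoid_sym[OF p(2)] rij]] by blast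
  have I1: "S$i$k * S$p$p = S$i$p * S$p$k"
    using hpi factA[OF pd, of p i k] unfolding E_def by auto
  have I2: "S$j$k * S$p$p = S$j$p * S$p$k"
    using hpj factA[OF pd, of p j k] unfolding E_def by auto
  have X: "S$i$j * S$i$p * S$j$p \<le> (S$i$j)^2 * S$p$p"
  proof -
    consider "p = i" | "p = j" | "p \<noteq> i" "p \<noteq> j" "sep E p i j" | "p \<noteq> i" "p \<noteq> j" "\<not> sep E p i j"
      by blast
    then show ?thesis
    proof cases
      case 1 then show ?thesis using sym[of j i] by (simp add: power2_eq_square)
    next
      case 2 then show ?thesis by (simp add: power2_eq_square)
    next
      case 3
      then have "S$i$j * S$p$p = S$i$p * S$p$j" using factA[OF pd] unfolding E_def by blast
      then show ?thesis using sym[of j p] by (simp add: power2_eq_square algebra_simps)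
    next
      case 4
      have sp: "sep E p i k" using hpi 4 by blast
      have "{x. ravoid E p i x} \<subset> {x. ravoid E k i x}"
        using comp_psubset[OF p(2) ik sp] 4 by blast
      then have "card {x. ravoid E p i x} < card {x. ravoid E k i x}"
        by (rule psubset_card_mono[rotated]) simp
      then have "S$i$j * S$i$p * S$p$j < (S$i$j)^2 * S$p$p"
        using less.hyps[of p i j] less(2) 4 unfolding E_def by blast
      then show ?thesis using sym[of j p] by simp
    qed
  qed
  define L where "L = S$i$j * S$i$k * S$k$j"
  have "L * (S$p$p)^2 = S$i$j * (S$i$k * S$p$p) * (S$j$k * S$p$p)"
    unfolding L_def using sym[of k j] by (simp add: power2_eq_square algebra_simps)
  also have "\<dots> = (S$i$j * S$i$p * S$j$p) * (S$p$k)^2"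
    unfolding I1 I2 by (simp add: power2_eq_square algebra_simps)
  also have "\<dots> \<le> ((S$i$j)^2 * S$p$p) * (S$p$k)^2"
    using X by (rule mult_right_mono) simp
  also have "\<dots> < ((S$i$j)^2 * S$p$p) * (S$p$p * S$k$k)"
    using spk sij spp by (intro mult_strict_left_mono) auto
  also have "\<dots> = ((S$i$j)^2 * S$k$k) * (S$p$p)^2" by (simp add: power2_eq_square algebra_simps)
  finally have "L * (S$p$p)^2 < ((S$i$j)^2 * S$k$k) * (S$p$p)^2" .
  then show ?case unfolding L_def using spp
    by (meson mult_less_cancel_right_pos zero_less_power)
qed

definition Qv :: "real^'n^'n \<Rightarrow> 'n \<Rightarrow> 'n \<Rightarrow> 'n \<Rightarrow> real" where
  "Qv S k i j = S$i$k * S$k$j / S$i$j"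

lemma gen_char:
  fixes S :: "real^'n::finite^'n"
  assumes pd: "pos_def_mat S" and tr: "is_tree (ci_graph S)"
    and d: "i \<noteq> j" "k \<noteq> i" "k \<noteq> j"
  shows "Qv S k i j \<le> S$k$k \<and> (Qv S k i j = S$k$k \<longleftrightarrow> sep (ci_graph S) k i j)"
proof -
  have sij: "S$i$j \<noteq> 0" using all_nonzero[OF pd tr d(1)] .
  then have s2: "(S$i$j)^2 > 0" by simp
  show ?thesis
  proof (cases "sep (ci_graph S) k i j")
    case True
    then have "S$i$j * S$k$k = S$i$k * S$k$j" using factA[OF pd] by blast
    then have "Qv S k i j = S$k$k" unfolding Qv_def using sij by (simp add: field_simps)
    then show ?thesis using True by simp
  next
    case False
    have "S$i$j * S$i$k * S$k$j < (S$i$j)^2 * S$k$k" using factB[OF pd tr d False] .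
    then have "S$i$j * S$i$k * S$k$j < S$k$k * (S$i$j)^2" by (simp only: mult.commute)
    then have "(S$i$j * S$i$k * S$k$j) / (S$i$j)^2 < S$k$k" by (simp only: pos_divide_less_eq[OF s2])
    moreover have "(S$i$j * S$i$k * S$k$j) / (S$i$j)^2 = Qv S k i j"
      unfolding Qv_def using sij by (simp add: power2_eq_square field_simps)
    ultimately show ?thesis using False by simp
  qed
qed

definition argset :: "'n set set \<Rightarrow> 'n \<Rightarrow> 'n \<Rightarrow> 'n \<Rightarrow> bool" where
  "argset E k i j = (if k \<in> leaves E then (nbr E k = i \<or> nbr E k = j \<or> sep E (nbr E k) i j) else sep E k i j)"

definition valv :: "real^'n^'n \<Rightarrow> 'n set set \<Rightarrow> 'n \<Rightarrow> real" where
  "valv S E k = (if k \<in> leaves E then (S$(nbr E k)$k)^2 / S$(nbr E k)$(nbr E k) else S$k$k)"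

lemma arg_char:
  fixes S :: "real^'n::finite^'n"
  assumes pd: "pos_def_mat S" and tr: "is_tree (ci_graph S)"
    and d: "i \<noteq> j" "k \<noteq> i" "k \<noteq> j"
  shows "Qv S k i j \<le> valv S (ci_graph S) k \<and> (Qv S k i j = valv S (ci_graph S) k \<longleftrightarrow> argset (ci_graph S) k i j)"
proof (cases "k \<in> leaves (ci_graph S)")
  case False
  then show ?thesis using gen_char[OF pd tr d] unfolding valv_def argset_def by simp
next
  case True
  define E where "E = ci_graph S"
  define q where "q = nbr E k"
  have kq: "adj E k q" using leafD(1)[OF True] unfolding q_def E_def .
  have qk: "q \<noteq> k" using kq adj_irrefl by metis
  have sym: "S$a$b = S$b$a" for a b using pd_sym[OF pd] .
  have sij: "S$i$j \<noteq> 0" using all_nonzero[OF pd tr d(1)] .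
  have sqk: "S$q$k \<noteq> 0" using all_nonzero[OF pd tr qk] .
  have sqq: "S$q$q > 0" using pd_diag_pos[OF pd] .
  have rel: "S$x$k * S$q$q = S$x$q * S$q$k" if xk: "x \<noteq> k" for x
  proof (cases "x = q")
    case True then show ?thesis by simp
  next
    case False
    obtain p where p: "adj E p k" "ravoid E k x p" using nbr_exists[OF tr xk] unfolding E_def by blast
    have pq: "p = q" using leafD(2)[OF True, of p] p(1) adj_sym unfolding q_def E_def by metis
    have "x \<noteq> p" using False pq by simp
    then have "sep E p x k" using U_sep[OF tr[folded E_def] p(1) ravoid_sym[OF p(2)]] by blast
    then have "sep E q x k" using pq by simp
    then show ?thesis using factA[OF pd] unfolding E_def by blast
  qed
  have R: "Qv S q i j \<le> S$q$q \<and> (Qv S q i j = S$q$q \<longleftrightarrow> (q = i \<or> q = j \<or> sep E q i j))"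
  proof (cases "q = i \<or> q = j")
    case True
    then have "Qv S q i j = S$q$q" unfolding Qv_def using sij sym[of i j] by auto
    then show ?thesis using True by auto
  next
    case False
    then show ?thesis using gen_char[OF pd tr d(1), of q] unfolding E_def by auto
  qed
  define c where "c = (S$q$k)^2 / (S$q$q)^2"
  have c: "c > 0" unfolding c_def using sqk sqq by simp
  have "Qv S k i j * (S$q$q)^2 = S$i$j * (S$i$k * S$q$q) * (S$j$k * S$q$q) / (S$i$j)^2"
    unfolding Qv_def using sij sym[of k j] by (simp add: power2_eq_square field_simps)
  also have "\<dots> = Qv S q i j * (S$q$k)^2"
    unfolding rel[OF d(2)[symmetric]] rel[OF d(3)[symmetric]] Qv_def using sij sym[of q j]
    by (simp add: power2_eq_square field_simps)
  finally have eq: "Qv S k i j = Qv S q i j * c" unfolding c_def using sqq by (simp add: field_simps)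
  have vv: "valv S E k = S$q$q * c" unfolding valv_def c_def q_def using True sqq unfolding E_def
    by (simp add: power2_eq_square field_simps)
  have "Qv S k i j \<le> valv S E k" unfolding eq vv using R c by (simp add: mult_right_mono)
  moreover have "Qv S k i j = valv S E k \<longleftrightarrow> argset E k i j"
    unfolding eq vv argset_def using R c True q_def E_def by auto
  ultimately show ?thesis unfolding E_def by simp
qed

lemma arg_exists:
  fixes E :: "'n set set" and a b c k :: 'n
  assumes tr: "is_tree E" and abc: "a \<noteq> b" "a \<noteq> c" "b \<noteq> c"
  shows "\<exists>i j. i \<noteq> j \<and> k \<noteq> i \<and> k \<noteq> j \<and> argset E k i j"
proof (cases "k \<in> leaves E")
  case True
  define q where "q = nbr E k"
  have qk: "q \<noteq> k" using leafD(1)[OF True] adj_irrefl unfolding q_def by metis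
  have "(a \<noteq> q \<and> a \<noteq> k) \<or> (b \<noteq> q \<and> b \<noteq> k) \<or> (c \<noteq> q \<and> c \<noteq> k)" using abc by auto
  then obtain j where j: "j \<noteq> q" "j \<noteq> k" by blast
  have "argset E k q j" using True unfolding argset_def q_def by simp
  moreover have "q \<noteq> j" "k \<noteq> q" "k \<noteq> j" using qk j by auto
  ultimately show ?thesis by blast
next
  case False
  have "a \<noteq> k \<or> b \<noteq> k" using abc by auto
  then obtain x where "x \<noteq> k" by blast
  then obtain u v where uv: "u \<noteq> v" "adj E k u" "adj E k v" using nonleaf_two[OF tr False] by blast
  then have "sep E k u v" using two_nbrs_sep[OF tr] by blast
  then show ?thesis using False uv adj_irrefl unfolding argset_def by metis
qed

lemma upper_eq:
  fixes f :: "'a \<Rightarrow> real"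
  assumes "\<And>x. P x \<Longrightarrow> f x \<le> \<alpha> \<and> (f x = \<alpha> \<longleftrightarrow> A x)" "\<exists>x. P x \<and> A x"
    "\<And>x. P x \<Longrightarrow> f x \<le> \<beta> \<and> (f x = \<beta> \<longleftrightarrow> B x)" "\<exists>x. P x \<and> B x" "P y"
  shows "A y \<longleftrightarrow> B y"
proof -
  obtain x1 where "P x1" "A x1" using assms(2) by blast
  obtain x2 where "P x2" "B x2" using assms(4) by blast
  have "\<alpha> = \<beta>" using assms(1,3) \<open>P x1\<close> \<open>A x1\<close> \<open>P x2\<close> \<open>B x2\<close> by (metis order.antisym)
  then show ?thesis using assms(1,3,5) by metis
qed

definition compat :: "'n set set \<Rightarrow> 'n set set \<Rightarrow> bool" where
  "compat E1 E2 \<longleftrightarrow> (\<forall>k i j. i \<noteq> j \<longrightarrow> k \<noteq> i \<longrightarrow> k \<noteq> j \<longrightarrow> (argset E1 k i j \<longleftrightarrow> argset E2 k i j))"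

definition three :: "'n itself \<Rightarrow> bool" where
  "three T \<longleftrightarrow> (\<exists>a b c :: 'n. a \<noteq> b \<and> a \<noteq> c \<and> b \<noteq> c)"

lemma compat_sym: "compat E1 E2 \<Longrightarrow> compat E2 E1"
  unfolding compat_def by metis

lemma D1:
  fixes E1 E2 :: "'n set set"
  assumes t1: "is_tree E1" and c: "compat E1 E2" and k1: "k \<notin> leaves E1" and k2: "k \<in> leaves E2"
  shows "nbr E2 k \<in> leaves E1 \<and> nbr E1 (nbr E2 k) = k"
proof -
  define q where "q = nbr E2 k"
  have qk: "q \<noteq> k" using leafD(1)[OF k2] adj_irrefl unfolding q_def by metis
  have sepq: "sep E1 k q j" if "j \<noteq> q" "j \<noteq> k" for j
  proof -
    have "argset E2 k q j" using k2 unfolding argset_def q_def by simp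
    then have "argset E1 k q j" using c that qk unfolding compat_def by metis
    then show ?thesis using k1 unfolding argset_def by simp
  qed
  have onlyk: "x = k" if "adj E1 q x" for x
  proof (rule ccontr)
    assume xk: "x \<noteq> k"
    have "x \<noteq> q" using that adj_irrefl by metis
    then have "sep E1 k q x" using sepq xk by blast
    moreover have "ravoid E1 k q x" using ravoid_edge[of q x E1 k] that qk xk by blast
    ultimately show False unfolding sep_def by blast
  qed
  obtain p where "adj E1 p q" using nbr_exists[OF t1 qk[symmetric]] by blast
  then have "adj E1 q p" using adj_sym by metis
  then have "p = k" using onlyk by blast
  then have "{u. adj E1 q u} = {k}" using onlyk \<open>adj E1 q p\<close> by blast
  then have ql: "q \<in> leaves E1" unfolding leaves_def by simp
  have "nbr E1 q = k" using leafD(2)[OF ql] \<open>adj E1 q p\<close> \<open>p = k\<close> by simp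
  then show ?thesis using ql q_def by simp
qed

lemma no_adj_leaves:
  fixes E :: "'n set set"
  assumes t: "is_tree E" and th: "three TYPE('n)" and kl: "k \<in> leaves E"
  shows "nbr E k \<notin> leaves E"
proof
  define q where "q = nbr E k"
  assume ql: "nbr E k \<in> leaves E"
  then have ql: "q \<in> leaves E" unfolding q_def .
  have kq: "adj E k q" using leafD(1)[OF kl] unfolding q_def .
  then have qk: "q \<noteq> k" using adj_irrefl by metis
  have nq: "nbr E q = k" using leafD(2)[OF ql] kq adj_sym by metis
  obtain a b c :: 'n where abc: "a \<noteq> b" "a \<noteq> c" "b \<noteq> c" using th unfolding three_def by blast
  have "(a \<noteq> q \<and> a \<noteq> k) \<or> (b \<noteq> q \<and> b \<noteq> k) \<or> (c \<noteq> q \<and> c \<noteq> k)" using abc by auto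
  then obtain x where x: "x \<noteq> q" "x \<noteq> k" by blast
  obtain p where p: "adj E p k" "ravoid E k x p" using nbr_exists[OF t x(2)] by blast
  have "p = q" using leafD(2)[OF kl, of p] p(1) adj_sym unfolding q_def by metis
  then have r1: "ravoid E k q x" using ravoid_sym[OF p(2)] by simp
  have s1: "sep E q x k" using U_sep[OF t _ r1 x(1)] kq adj_sym by metis
  obtain p' where p': "adj E p' q" "ravoid E q x p'" using nbr_exists[OF t x(1)] by blast
  have "p' = k" using leafD(2)[OF ql, of p'] p'(1) adj_sym nq by metis
  then have "ravoid E q x k" using p'(2) by simp
  then show False using s1 unfolding sep_def by blast
qed

definition SS :: "'n set set \<Rightarrow> 'n set set \<Rightarrow> 'n set" where
  "SS E1 E2 = {x. x \<in> leaves E1 \<and> x \<notin> leaves E2}"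

definition sw :: "'n set set \<Rightarrow> 'n set set \<Rightarrow> 'n \<Rightarrow> 'n" where
  "sw E1 E2 x = (if x \<in> SS E1 E2 then nbr E1 x else if x \<in> SS E2 E1 then nbr E2 x else x)"

lemma sw_sym: "sw E1 E2 = sw E2 E1"
  unfolding sw_def SS_def by (auto simp: fun_eq_iff)

lemma P1:
  fixes E1 E2 :: "'n set set"
  assumes t1: "is_tree E1" and t2: "is_tree E2" and c: "compat E1 E2" and th: "three TYPE('n)"
    and a: "a \<in> SS E1 E2"
  shows "nbr E1 a \<in> SS E2 E1 \<and> nbr E2 (nbr E1 a) = a"
proof -
  have "a \<notin> leaves E2" "a \<in> leaves E1" using a unfolding SS_def by auto
  then have "nbr E1 a \<in> leaves E2 \<and> nbr E2 (nbr E1 a) = a" using D1[OF t2 compat_sym[OF c]] by blast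
  moreover have "nbr E1 a \<notin> leaves E1" using no_adj_leaves[OF t1 th \<open>a \<in> leaves E1\<close>] .
  ultimately show ?thesis unfolding SS_def by auto
qed

locale two_trees =
  fixes E1 E2 :: "'n set set"
  assumes t1: "is_tree E1" and t2: "is_tree E2" and c: "compat E1 E2" and th: "three TYPE('n)"
begin

lemma P1a: "a \<in> SS E1 E2 \<Longrightarrow> nbr E1 a \<in> SS E2 E1 \<and> nbr E2 (nbr E1 a) = a"
  using P1[OF t1 t2 c th] by blast
lemma P1b: "a \<in> SS E2 E1 \<Longrightarrow> nbr E2 a \<in> SS E1 E2 \<and> nbr E1 (nbr E2 a) = a"
  using P1[OF t2 t1 compat_sym[OF c] th] by blast

lemma SS_disj: "x \<in> SS E1 E2 \<Longrightarrow> x \<notin> SS E2 E1" unfolding SS_def by auto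
lemma SS_disj2: "x \<in> SS E2 E1 \<Longrightarrow> x \<notin> SS E1 E2" unfolding SS_def by auto

lemma sw_invol: "sw E1 E2 (sw E1 E2 x) = x"
proof -
  consider "x \<in> SS E1 E2" | "x \<in> SS E2 E1" | "x \<notin> SS E1 E2" "x \<notin> SS E2 E1" by blast
  then show ?thesis
  proof cases
    case 1
    have a: "nbr E1 x \<in> SS E2 E1" "nbr E2 (nbr E1 x) = x" using P1a[OF 1] by auto
    have b: "nbr E1 x \<notin> SS E1 E2" using SS_disj2[OF a(1)] .
    show ?thesis using 1 a b by (simp add: sw_def)
  next
    case 2
    have a: "nbr E2 x \<in> SS E1 E2" "nbr E1 (nbr E2 x) = x" using P1b[OF 2] by auto
    have b: "x \<notin> SS E1 E2" using SS_disj2[OF 2] .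
    show ?thesis using 2 a b by (simp add: sw_def)
  qed (simp add: sw_def)
qed

lemma sw_adj1: "sw E1 E2 x = x \<or> adj E1 x (sw E1 E2 x)"
proof -
  consider "x \<in> SS E1 E2" | "x \<in> SS E2 E1" | "x \<notin> SS E1 E2" "x \<notin> SS E2 E1" by blast
  then show ?thesis
  proof cases
    case 1
    then have "x \<in> leaves E1" unfolding SS_def by simp
    then show ?thesis using leafD(1)[of x E1] 1 unfolding sw_def by simp
  next
    case 2
    have "sw E1 E2 x = nbr E2 x" using 2 SS_disj2[OF 2] unfolding sw_def by simp
    moreover have "nbr E2 x \<in> leaves E1" "nbr E1 (nbr E2 x) = x" using P1b[OF 2] unfolding SS_def by auto
    ultimately show ?thesis using leafD(1)[of "nbr E2 x" E1] adj_sym by metis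
  qed (simp add: sw_def)
qed

lemma walk_sep:
  assumes "adj E1 u v" "sep E1 k (sw E1 E2 u) (sw E1 E2 v)"
  shows "k = u \<or> k = v"
proof (rule ccontr)
  assume nk: "\<not> (k = u \<or> k = v)"
  have k1: "k \<noteq> sw E1 E2 u" "k \<noteq> sw E1 E2 v" using assms(2) unfolding sep_def by auto
  have "ravoid E1 k (sw E1 E2 u) u"
    using ravoid_edge[of "sw E1 E2 u" u E1 k] sw_adj1[of u] adj_sym k1 nk by metis
  moreover have "ravoid E1 k u v" using ravoid_edge[of u v E1 k] assms(1) nk by blast
  moreover have "ravoid E1 k v (sw E1 E2 v)"
    using ravoid_edge[of v "sw E1 E2 v" E1 k] sw_adj1[of v] k1 nk by metis
  ultimately have "ravoid E1 k (sw E1 E2 u) (sw E1 E2 v)" using ravoid_trans by metis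
  then show False using assms(2) unfolding sep_def by blast
qed

lemma main_adj:
  assumes uv: "adj E1 u v"
  shows "adj E2 (sw E1 E2 u) (sw E1 E2 v)"
proof -
  let ?s = "sw E1 E2"
  have uv': "u \<noteq> v" using uv adj_irrefl by metis
  have ne: "?s u \<noteq> ?s v" using sw_invol uv' by metis
  have "\<not> sep E2 k (?s u) (?s v)" for k
  proof
    assume s2: "sep E2 k (?s u) (?s v)"
    have ku: "k \<noteq> ?s u" and kv: "k \<noteq> ?s v" using s2 unfolding sep_def by auto
    have kl2: "k \<notin> leaves E2" using sep_nonleaf[OF t2 s2] .
    have "argset E2 k (?s u) (?s v)" using s2 kl2 unfolding argset_def by simp
    then have a1: "argset E1 k (?s u) (?s v)" using c ne ku kv unfolding compat_def by metis
    show False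
    proof (cases "k \<in> leaves E1")
      case False
      then have "sep E1 k (?s u) (?s v)" using a1 unfolding argset_def by simp
      then have "k = u \<or> k = v" using walk_sep[OF uv] by blast
      moreover have "x \<notin> SS E1 E2 \<Longrightarrow> x \<notin> SS E2 E1 \<Longrightarrow> ?s x = x" for x unfolding sw_def by simp
      ultimately have "k \<in> SS E1 E2 \<or> k \<in> SS E2 E1" using ku kv by metis
      then show False using False kl2 unfolding SS_def by auto
    next
      case True
      define q where "q = nbr E1 k"
      have kS: "k \<in> SS E1 E2" using True kl2 unfolding SS_def by simp
      have sqa: "q \<in> SS E2 E1" "nbr E2 q = k" using P1a[OF kS] unfolding q_def by auto
      have sq: "?s q = k" using sqa SS_disj2[OF sqa(1)] unfolding sw_def by simp
      have "q = ?s u \<or> q = ?s v \<or> sep E1 q (?s u) (?s v)" using a1 True unfolding argset_def q_def by simp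
      then have "q = ?s u \<or> q = ?s v \<or> q = u \<or> q = v" using walk_sep[OF uv] by blast
      then show False
      proof (elim disjE)
        assume "q = ?s u"
        then have "u = k" using sw_invol sq by metis
        then have "v = q" using leafD(2)[OF True] uv unfolding q_def by simp
        then show False using sq kv by simp
      next
        assume "q = ?s v"
        then have "v = k" using sw_invol sq by metis
        then have "u = q" using leafD(2)[OF True] uv adj_sym unfolding q_def by metis
        then show False using sq ku by simp
      next
        assume "q = u" then show False using sq ku by simp
      next
        assume "q = v" then show False using sq kv by simp
      qed
    qed
  qed
  then show ?thesis using edge_char[OF t2 ne] by blast
qed

lemma leaf_swap_eq: "leaf_swap E1 (SS E1 E2) = sw E1 E2"
proof
  fix x
  show "leaf_swap E1 (SS E1 E2) x = sw E1 E2 x"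
  proof (cases "x \<in> SS E1 E2")
    case True then show ?thesis unfolding leaf_swap_def sw_def by simp
  next
    case False
    show ?thesis
    proof (cases "x \<in> SS E2 E1")
      case True
      have ex: "nbr E2 x \<in> SS E1 E2 \<and> nbr E1 (nbr E2 x) = x" using P1b[OF True] .
      have "(THE a. a \<in> SS E1 E2 \<and> nbr E1 a = x) = nbr E2 x"
      proof (rule the_equality)
        show "nbr E2 x \<in> SS E1 E2 \<and> nbr E1 (nbr E2 x) = x" using ex .
      next
        fix a assume "a \<in> SS E1 E2 \<and> nbr E1 a = x"
        then show "a = nbr E2 x" using P1a by metis
      qed
      then show ?thesis using False True ex unfolding leaf_swap_def sw_def by auto
    next
      case F2: False
      have "\<not> (\<exists>a\<in>SS E1 E2. nbr E1 a = x)" using P1a F2 by metis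
      then show ?thesis using False F2 unfolding leaf_swap_def sw_def by auto
    qed
  qed
qed

lemma admissible: "admissible_leaf_set E1 (SS E1 E2)"
  unfolding admissible_leaf_set_def
proof (intro conjI ballI impI)
  show "SS E1 E2 \<subseteq> leaves E1" unfolding SS_def by auto
next
  fix a b assume "a \<in> SS E1 E2" "b \<in> SS E1 E2" "a \<noteq> b"
  then show "nbr E1 a \<noteq> nbr E1 b" using P1a by metis
qed

end

lemma two_trees_sym: "two_trees E1 E2 \<Longrightarrow> two_trees E2 E1"
  unfolding two_trees_def using compat_sym by blast

lemma comb_main:
  assumes tt: "two_trees E1 E2"
  shows "E2 \<in> tree_class E1"
proof -
  interpret A: two_trees E1 E2 by fact
  interpret B: two_trees E2 E1 using two_trees_sym[OF tt] .
  let ?s = "sw E1 E2"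
  have sB: "sw E2 E1 = ?s" using sw_sym by metis
  have g1: "\<exists>x y. e = {x, y} \<and> adj E1 x y" if "e \<in> E1" for e
  proof -
    have "is_graph E1" using A.t1 unfolding is_tree_def by blast
    then have "E1 = {{x, y} | x y. adj E1 x y}" by (rule graph_edges)
    then have "e \<in> {{x, y} | x y. adj E1 x y}" using that by (simp only:)
    then show ?thesis by blast
  qed
  have g2: "\<exists>x y. e = {x, y} \<and> adj E2 x y" if "e \<in> E2" for e
  proof -
    have "is_graph E2" using A.t2 unfolding is_tree_def by blast
    then have "E2 = {{x, y} | x y. adj E2 x y}" by (rule graph_edges)
    then have "e \<in> {{x, y} | x y. adj E2 x y}" using that by (simp only:)
    then show ?thesis by blast
  qed
  have "swapped_tree E1 (SS E1 E2) = E2"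
    unfolding swapped_tree_def A.leaf_swap_eq
  proof
    show "(\<lambda>e. ?s ` e) ` E1 \<subseteq> E2"
    proof
      fix e assume "e \<in> (\<lambda>e. ?s ` e) ` E1"
      then obtain e' where "e' \<in> E1" "e = ?s ` e'" by blast
      moreover obtain x y where "e' = {x, y}" "adj E1 x y" using g1[OF \<open>e' \<in> E1\<close>] by blast
      ultimately have "adj E1 x y" "e = {?s x, ?s y}" by auto
      then show "e \<in> E2" using A.main_adj unfolding adj_def by auto
    qed
  next
    show "E2 \<subseteq> (\<lambda>e. ?s ` e) ` E1"
    proof
      fix e assume "e \<in> E2"
      then obtain x y where xy': "e = {x, y}" "adj E2 x y" using g2 by blast
      then have xy: "adj E2 x y" "e = {x, y}" by auto
      have "adj E1 (?s x) (?s y)" using B.main_adj[OF xy(1)] sB by simp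
      then have "{?s x, ?s y} \<in> E1" unfolding adj_def by auto
      moreover have "e = ?s ` {?s x, ?s y}" using xy(2) A.sw_invol by simp
      ultimately show "e \<in> (\<lambda>e. ?s ` e) ` E1" by blast
    qed
  qed
  then show ?thesis unfolding tree_class_def using A.admissible by blast
qed

lemma small_case:
  fixes E1 E2 :: "'n set set"
  assumes t1: "is_tree E1" and t2: "is_tree E2" and nth: "\<not> three TYPE('n)"
  shows "E2 \<in> tree_class E1"
proof -
  have nosep: "\<not> sep E k x y" for E :: "'n set set" and k x y
  proof
    assume "sep E k x y"
    then have "x \<noteq> k" "y \<noteq> k" "x \<noteq> y" unfolding sep_def using ravoid_refl[of E k x] by auto
    then show False using nth unfolding three_def by blast
  qed
  have full: "E = {{x, y} | x y. x \<noteq> y}" if "is_tree E" for E :: "'n set set"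
  proof -
    have "adj E x y \<longleftrightarrow> x \<noteq> y" for x y using edge_char[OF that] nosep adj_irrefl by metis
    then have st: "{{x, y} | x y. adj E x y} = {{x, y} | x y. x \<noteq> y}" by simp
    have "is_graph E" using that unfolding is_tree_def by blast
    then have "E = {{x, y} | x y. adj E x y}" by (rule graph_edges)
    then show ?thesis using st by (rule trans)
  qed
  have eq: "E2 = E1" using full[OF t1] full[OF t2] by (simp only:)
  have "leaf_swap E1 {} = id" unfolding leaf_swap_def by auto
  then have "swapped_tree E1 {} = E1" unfolding swapped_tree_def by simp
  moreover have "admissible_leaf_set E1 {}" unfolding admissible_leaf_set_def by simp
  ultimately show ?thesis unfolding tree_class_def eq by blast
qed

theorem theorem2:
  fixes Sigma_star D_star Sigma' D' :: "real^'n::finite^'n"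
  assumes "pos_def_mat Sigma_star"
    and "is_tree (ci_graph Sigma_star)"
    and "nonneg_diag_mat D_star"
    and "pos_def_mat Sigma'"
    and "is_tree (ci_graph Sigma')"
    and "nonneg_diag_mat D'"
    and "Sigma_star + D_star = Sigma' + D'"
  shows "ci_graph Sigma' \<in> tree_class (ci_graph Sigma_star)"
proof (cases "three TYPE('n)")
  case False
  then show ?thesis using small_case[OF assms(2) assms(5)] by blast
next
  case True
  define E1 where "E1 = ci_graph Sigma_star"
  define E2 where "E2 = ci_graph Sigma'"
  have off: "Sigma_star$a$b = Sigma'$a$b" if "a \<noteq> b" for a b
  proof -
    have "(Sigma_star + D_star)$a$b = (Sigma' + D')$a$b" using assms(7) by simp
    moreover have "D_star$a$b = 0" "D'$a$b = 0" using assms(3,6) that unfolding nonneg_diag_mat_def by auto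
    ultimately show ?thesis by simp
  qed
  have Qeq: "Qv Sigma_star k i j = Qv Sigma' k i j" if "i \<noteq> j" "k \<noteq> i" "k \<noteq> j" for k i j
    unfolding Qv_def using off that by (metis)
  obtain a b c :: 'n where abc: "a \<noteq> b" "a \<noteq> c" "b \<noteq> c" using True unfolding three_def by blast
  have "compat E1 E2"
    unfolding compat_def
  proof (intro allI impI)
    fix k i j :: 'n assume d: "i \<noteq> j" "k \<noteq> i" "k \<noteq> j"
    define P where "P = (\<lambda>(x::'n, y::'n). x \<noteq> y \<and> k \<noteq> x \<and> k \<noteq> y)"
    define f where "f = (\<lambda>(x, y). Qv Sigma_star k x y)"
    define A where "A = (\<lambda>(x, y). argset E1 k x y)"
    define B where "B = (\<lambda>(x, y). argset E2 k x y)"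
    have "A (i, j) \<longleftrightarrow> B (i, j)"
    proof (rule upper_eq[where P = P and f = f])
      show "f x \<le> valv Sigma_star E1 k \<and> (f x = valv Sigma_star E1 k \<longleftrightarrow> A x)" if "P x" for x
        using that arg_char[OF assms(1,2)] unfolding P_def f_def A_def E1_def by (cases x) auto
      show "f x \<le> valv Sigma' E2 k \<and> (f x = valv Sigma' E2 k \<longleftrightarrow> B x)" if "P x" for x
        using that arg_char[OF assms(4,5)] Qeq unfolding P_def f_def B_def E2_def by (cases x) auto
      show "\<exists>x. P x \<and> A x" using arg_exists[OF assms(2) abc, of k] unfolding P_def A_def E1_def by auto
      show "\<exists>x. P x \<and> B x" using arg_exists[OF assms(5) abc, of k] unfolding P_def B_def E2_def by auto
      show "P (i, j)" using d unfolding P_def by simp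
    qed
    then show "argset E1 k i j \<longleftrightarrow> argset E2 k i j" unfolding A_def B_def by simp
  qed
  then have "two_trees E1 E2" unfolding two_trees_def E1_def E2_def using assms(2,5) True by blast
  then show ?thesis using comb_main unfolding E1_def E2_def by blast
qed

end
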